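(* Let $L\ge1$ be an integer. For integers $0\le 2M\le N\le L$, \[ Z(L;N,M)=\binom{L+2}{M}\binom{L}{N-M}-\binom{L}{M-1}\binom{L+2}{N-M+1}, \] and for integers $0\le 2M\le N\le 2L$, \[ \widetilde{Z}(L;N,M)=\binom{L}{M}\binom{L}{N-M}-\binom{L}{M-1}\binom{L}{N-M+1}. \]
   Context: In the closed formulas, $\binom{a}{k}=0$ if $k<0$ or $k>a$. In the definitions below, for integers $x$ and $k\ge0$, $\binom{x}{k}=\frac{x(x-1)\cdots(x-k+1)}{k!}$. Define \[ Z(L;N,M)=\sum \binom{L}{N_r}\prod_{n\ge1}\binom{P'_n+M'_n}{M'_n}\binom{P_n+M_n}{M_n},\qquad \widetilde{Z}(L;N,M)=\sum \binom{L}{N_r}\prod_{n\ge1}\binom{P'_n+M'_n+n}{M'_n}\binom{P_n+M_n}{M_n}, \] where each sum runs over all nonnegative integers $N_r$ and finitely supported families of nonnegative integers $(M_n)_{n\ge1},(M'_n)_{n\ge1}$ with $N=N_r+2\sum_n nM'_n$ and $M=\sum_n n(M_n+M'_n)$, and $P'_n=L-N+2\sum_{m>n}(m-n)M'_m$, $P_n=N-2M+2\sum_{m>n}(m-n)M_m$. *)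

theory Defs
  imports Complex_Main
begin

definition gbin :: "int \<Rightarrow> nat \<Rightarrow> real" where
  "gbin x k = (of_int x :: real) gchoose k"

definition cbin :: "nat \<Rightarrow> int \<Rightarrow> int" where
  "cbin a k = (if k < 0 then 0 else int (a choose nat k))"

text \<open>Families (M_n)_{n\<ge>1} are functions nat \<Rightarrow> nat with value 0 at index 0;
  the constraint M = \<Sum> n (M_n + M'_n) forces M_n = M'_n = 0 for n > M,
  so finite support is expressed by vanishing beyond M.\<close>
definition configs :: "nat \<Rightarrow> nat \<Rightarrow> (nat \<times> (nat \<Rightarrow> nat) \<times> (nat \<Rightarrow> nat)) set" where
  "configs N M = {(Nr, Mf, Mpf).
      Mf 0 = 0 \<and> Mpf 0 = 0 \<and> (\<forall>n>M. Mf n = 0 \<and> Mpf n = 0) \<and>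
      N = Nr + 2 * (\<Sum>n\<in>{1..M}. n * Mpf n) \<and>
      M = (\<Sum>n\<in>{1..M}. n * (Mf n + Mpf n))}"

definition Pp :: "nat \<Rightarrow> nat \<Rightarrow> (nat \<Rightarrow> nat) \<Rightarrow> nat \<Rightarrow> nat \<Rightarrow> int" where
  "Pp L N Mpf M n = int L - int N + 2 * (\<Sum>m\<in>{n<..M}. (int m - int n) * int (Mpf m))"

definition Pn :: "nat \<Rightarrow> nat \<Rightarrow> (nat \<Rightarrow> nat) \<Rightarrow> nat \<Rightarrow> int" where
  "Pn N M Mf n = int N - 2 * int M + 2 * (\<Sum>m\<in>{n<..M}. (int m - int n) * int (Mf m))"

definition Z :: "nat \<Rightarrow> nat \<Rightarrow> nat \<Rightarrow> real" where
  "Z L N M = (\<Sum>(Nr, Mf, Mpf)\<in>configs N M.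
      real (L choose Nr) *
      (\<Prod>n\<in>{1..M}. gbin (Pp L N Mpf M n + int (Mpf n)) (Mpf n)
                     * gbin (Pn N M Mf n + int (Mf n)) (Mf n)))"

definition Zt :: "nat \<Rightarrow> nat \<Rightarrow> nat \<Rightarrow> real" where
  "Zt L N M = (\<Sum>(Nr, Mf, Mpf)\<in>configs N M.
      real (L choose Nr) *
      (\<Prod>n\<in>{1..M}. gbin (Pp L N Mpf M n + int (Mpf n) + int n) (Mpf n)
                     * gbin (Pn N M Mf n + int (Mf n)) (Mf n)))"

end

theory Submission
  imports Defs "HOL-Computational_Algebra.Formal_Power_Series"
begin


lemma core_alg:
  fixes A A1 B B1 Cc C1 c u k m :: real
  assumes h1: "(m+1)*A1 = (c+u+m)*A" and h2: "(k+1)*B1 = (c-k)*B" and h3: "k*C1 = (u-k)*Cc"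
    and m: "m+1 \<noteq> 0"
  shows "((m+k)*(m+k+1) - k*(k-1))*A1*B*Cc + (k+1)*k*A*B1*C1 = (c+m+k)*(u+m+k)*A*B*Cc"
proof -
  have "(m+1)*(((m+k)*(m+k+1) - k*(k-1))*A1*B*Cc + (k+1)*k*A*B1*C1)
      = ((m+k)*(m+k+1) - k*(k-1))*((m+1)*A1)*B*Cc + (m+1)*A*((k+1)*B1)*(k*C1)"
    by (simp add: algebra_simps)
  also have "\<dots> = ((m+k)*(m+k+1) - k*(k-1))*((c+u+m)*A)*B*Cc + (m+1)*A*((c-k)*B)*((u-k)*Cc)"
    by (simp only: h1 h2 h3)
  also have "\<dots> = (m+1)*((c+m+k)*(u+m+k)*A*B*Cc)"
    by (simp add: algebra_simps)
  finally show ?thesis using m by simp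
qed

lemma choose_shift_real:
  assumes "1 \<le> k" and "1 \<le> u"
  shows "real k * real ((u - 1) choose k) = (real u - real k) * real ((u - 1) choose (k - 1))"
proof (cases "k \<le> u")
  case True
  obtain j where k: "k = Suc j" using assms by (cases k) auto
  have "Suc j * ((u-1) choose Suc j) = (u - 1) * ((u - 1 - 1) choose j)"
    by (rule binomial_absorption)
  also have "\<dots> = (u - 1 - j) * ((u-1) choose j)"
    by (rule binomial_absorb_comp[symmetric])
  finally have e0: "Suc j * ((u-1) choose Suc j) = (u - 1 - j) * ((u-1) choose j)" .
  have e: "real (Suc j) * real ((u-1) choose Suc j) = real (u - 1 - j) * real ((u-1) choose j)"
    by (metis e0 of_nat_mult)
  have d: "real (u - 1 - j) = real u - real k" using True k by (simp add: of_nat_diff)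
  show ?thesis using e unfolding d k by simp
next
  case False
  then show ?thesis using assms by (simp add: binomial_eq_0)
qed

definition Fst :: "real \<Rightarrow> nat \<Rightarrow> nat \<Rightarrow> nat \<Rightarrow> real" where
  "Fst c u s k = (if 1 \<le> k \<and> k \<le> s then
      ((c + real u - 1 + real (s - k)) gchoose (s - k)) * (c gchoose k) * real ((u - 1) choose (k - 1))
    else 0)"

lemma Fst_term:
  assumes k: "k \<le> Suc s" and u: "1 \<le> u"
  shows "real s * (real s + 1) * Fst c u (Suc s) k
    = (c + real s) * (real u + real s) * Fst c u s k
      + ((- (real (Suc k) * (real (Suc k) - 1) * Fst c u (Suc s) (Suc k)))
         - (- (real k * (real k - 1) * Fst c u (Suc s) k)))"
proof -
  consider "k = 0" | "k = Suc s" | "1 \<le> k \<and> k \<le> s" using k by linarith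
  then show ?thesis
  proof cases
    case 1
    then show ?thesis by (simp add: Fst_def)
  next
    case 2
    then show ?thesis by (simp add: Fst_def algebra_simps)
  next
    case 3
    define m where "m = s - k"
    have s: "s = m + k" using 3 m_def by simp
    define A where "A = (c + real u - 1 + real m) gchoose m"
    define A1 where "A1 = (c + real u - 1 + real (Suc m)) gchoose (Suc m)"
    define B where "B = c gchoose k"
    define B1 where "B1 = c gchoose (Suc k)"
    define Cc where "Cc = real ((u - 1) choose (k - 1))"
    define C1 where "C1 = real ((u - 1) choose k)"
    have F1: "Fst c u (Suc s) k = A1 * B * Cc"
      using 3 by (simp add: Fst_def A1_def B_def Cc_def s Suc_diff_le)
    have F0: "Fst c u s k = A * B * Cc"
      using 3 by (simp add: Fst_def A_def B_def Cc_def s)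
    have F2: "Fst c u (Suc s) (Suc k) = A * B1 * C1"
      using 3 by (simp add: Fst_def A_def B1_def C1_def s)
    have h1: "(real m+1)*A1 = (c+real u+real m)*A"
    proof -
      have "real (Suc m) * ((c + real u + real m) gchoose Suc m) = (c + real u + real m) * ((c + real u + real m - 1) gchoose m)"
        by (rule gbinomial_absorption)
      then show ?thesis by (simp add: A_def A1_def algebra_simps)
    qed
    have h2: "(real k+1)*B1 = (c-real k)*B"
    proof -
      have "real (Suc k) * (c gchoose Suc k) = c * ((c - 1) gchoose k)"
        by (rule gbinomial_absorption)
      also have "\<dots> = (c - real k) * (c gchoose k)"
        by (rule gbinomial_absorb_comp[symmetric])
      finally show ?thesis by (simp add: B_def B1_def algebra_simps)
    qed
    have h3: "real k*C1 = (real u-real k)*Cc"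
      using choose_shift_real[of k u] 3 u by (simp add: C1_def Cc_def)
    have core: "((real m+real k)*(real m+real k+1) - real k*(real k-1))*A1*B*Cc + (real k+1)*real k*A*B1*C1
        = (c+real m+real k)*(real u+real m+real k)*A*B*Cc"
      by (rule core_alg[OF h1 h2 h3]) simp
    show ?thesis
      unfolding F0 F1 F2 using core by (simp add: s algebra_simps)
  qed
qed

lemma Fst_zero_above: "s < k \<Longrightarrow> Fst c u s k = 0"
  by (simp add: Fst_def)

lemma star:
  assumes u: "1 \<le> u" and s: "1 \<le> s"
  shows "(\<Sum>k\<le>s. Fst c u s k) = ((c + real s - 1) gchoose s) * real ((u + s - 1) choose (s - 1))"
  using s
proof (induction s rule: nat_induct_at_least)
  case base
  show ?case by (simp add: Fst_def)
next
  case (Suc s)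
  let ?R = "\<lambda>s. ((c + real s - 1) gchoose s) * real ((u + s - 1) choose (s - 1))"
  define G where "G k = - (real k * (real k - 1) * Fst c u (Suc s) k)" for k
  have "real s * (real s + 1) * (\<Sum>k\<le>Suc s. Fst c u (Suc s) k)
      = (\<Sum>k\<le>Suc s. real s * (real s + 1) * Fst c u (Suc s) k)"
    by (rule sum_distrib_left)
  also have "\<dots> = (\<Sum>k\<le>Suc s. (c + real s) * (real u + real s) * Fst c u s k + (G (Suc k) - G k))"
    by (intro sum.cong refl) (simp add: Fst_term[OF _ u] G_def del: of_nat_Suc)
  also have "\<dots> = (c + real s) * (real u + real s) * (\<Sum>k\<le>Suc s. Fst c u s k) + (\<Sum>k\<le>Suc s. G (Suc k) - G k)"
    by (simp add: sum.distrib sum_distrib_left del: sum.atMost_Suc)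
  also have "(\<Sum>k\<le>Suc s. G (Suc k) - G k) = G (Suc (Suc s)) - G 0"
    using sum_Suc_diff[of 0 "Suc s" G] by (simp add: atMost_atLeast0)
  also have "\<dots> = 0" by (simp add: G_def Fst_def)
  also have "(\<Sum>k\<le>Suc s. Fst c u s k) = (\<Sum>k\<le>s. Fst c u s k)"
    by (simp add: Fst_zero_above)
  finally have eq: "real s * (real s + 1) * (\<Sum>k\<le>Suc s. Fst c u (Suc s) k) = (c + real s) * (real u + real s) * ?R s"
    using Suc.IH by simp
  have r1: "(real s + 1) * ((c + real (Suc s) - 1) gchoose Suc s) = (c + real s) * ((c + real s - 1) gchoose s)"
    using gbinomial_absorption[of s "c + real s"] by (simp add: algebra_simps)
  obtain s' where s': "s = Suc s'" using Suc.hyps by (cases s) auto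
  have r2n: "Suc s' * ((u + s - 1) choose s) = (u + s - 1) * ((u + s - 1 - 1) choose s')"
    using binomial_absorption[of s' "u + s - 1"] s' by simp
  have r2: "real s * real ((u + Suc s - 1) choose (Suc s - 1)) = (real u + real s) * real ((u + s - 1) choose (s - 1))"
  proof -
    have "Suc s' * ((u + Suc s - 1) choose s) = Suc s' * ((u + s) choose (Suc s'))" using s' by simp
    also have "\<dots> = (u + s) * ((u + s - 1) choose s')"
      using binomial_absorption[of s' "u + s"] by simp
    finally have e0: "Suc s' * ((u + Suc s - 1) choose s) = (u + s) * ((u + s - 1) choose s')" .
    have e: "real (Suc s') * real ((u + Suc s - 1) choose s) = real (u + s) * real ((u + s - 1) choose s')"
      by (metis e0 of_nat_mult)
    have x: "Suc s - 1 = s" "s - 1 = s'" using s' by auto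
    show ?thesis unfolding x using e s' by (simp only: of_nat_add)
  qed
  have "real s * (real s + 1) * ?R (Suc s) = (c + real s) * (real u + real s) * ?R s"
  proof -
    have "real s * (real s + 1) * ?R (Suc s) = ((real s + 1) * ((c + real (Suc s) - 1) gchoose Suc s)) * (real s * real ((u + Suc s - 1) choose (Suc s - 1)))"
      by (simp add: algebra_simps)
    also have "\<dots> = (c + real s) * (real u + real s) * ?R s" by (simp only: r1 r2) (simp add: algebra_simps)
    finally show ?thesis .
  qed
  with eq have "real s * (real s + 1) * (\<Sum>k\<le>Suc s. Fst c u (Suc s) k) = real s * (real s + 1) * ?R (Suc s)" by simp
  moreover have "real s * (real s + 1) \<noteq> 0" using Suc.hyps by simp
  ultimately show ?case by simp
qed



definition fam :: "nat \<Rightarrow> nat \<Rightarrow> (nat \<Rightarrow> nat) set" where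
  "fam B t = {f. f 0 = 0 \<and> (\<forall>n>B. f n = 0) \<and> (\<Sum>n\<in>{1..B}. n * f n) = t}"

definition famS :: "nat \<Rightarrow> nat \<Rightarrow> nat \<Rightarrow> (nat \<Rightarrow> nat) set" where
  "famS B t s = {f \<in> fam B t. (\<Sum>n\<in>{1..B}. f n) = s}"

definition Wt :: "real \<Rightarrow> real \<Rightarrow> nat \<Rightarrow> (nat \<Rightarrow> nat) \<Rightarrow> real" where
  "Wt c a B f = (\<Prod>n\<in>{1..B}. (a + 2 * (\<Sum>m\<in>{n<..B}. (real m - real n) * real (f m)) + real (f n) + c * real n) gchoose (f n))"

definition GG :: "real \<Rightarrow> real \<Rightarrow> nat \<Rightarrow> nat \<Rightarrow> nat \<Rightarrow> real" where
  "GG c a B t s = (\<Sum>f\<in>famS B t s. Wt c a B f)"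

definition shin :: "nat \<Rightarrow> (nat \<Rightarrow> nat) \<Rightarrow> nat \<Rightarrow> nat" where
  "shin j g n = (if n = 0 then 0 else if n = 1 then j else g (n - 1))"

definition shout :: "(nat \<Rightarrow> nat) \<Rightarrow> nat \<Rightarrow> nat" where
  "shout f n = (if n = 0 then 0 else f (Suc n))"

lemma finite_fam: "finite (fam B t)"
proof -
  have "fam B t \<subseteq> {f. \<forall>x. (x \<in> {..B} \<longrightarrow> f x \<in> {..t}) \<and> (x \<notin> {..B} \<longrightarrow> f x = 0)}"
  proof
    fix f assume f: "f \<in> fam B t"
    have "f x \<le> t" if "x \<le> B" for x
    proof (cases "x = 0")
      case True then show ?thesis using f by (simp add: fam_def)
    next
      case False
      then have "x \<in> {1..B}" using that by simp
      then have "x * f x \<le> (\<Sum>n\<in>{1..B}. n * f n)"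
        by (intro member_le_sum) auto
      moreover have x1: "1 \<le> x" using False by simp
      have "f x \<le> x * f x" using mult_le_mono1[OF x1, of "f x"] by simp
      moreover have "(\<Sum>n\<in>{1..B}. n * f n) = t" using f by (simp add: fam_def)
      ultimately show ?thesis by linarith
    qed
    then show "f \<in> {f. \<forall>x. (x \<in> {..B} \<longrightarrow> f x \<in> {..t}) \<and> (x \<notin> {..B} \<longrightarrow> f x = 0)}"
      using f by (auto simp: fam_def)
  qed
  moreover have "finite {f. \<forall>x. (x \<in> {..B} \<longrightarrow> f x \<in> {..t}) \<and> (x \<notin> {..B} \<longrightarrow> (f x::nat) = 0)}"
    by (rule finite_set_of_finite_funs) auto
  ultimately show ?thesis by (rule finite_subset)
qed

lemma finite_famS: "finite (famS B t s)"
  unfolding famS_def using finite_fam by simp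

lemma sum_split1: "(\<Sum>n\<in>{1..Suc B}. h n) = h 1 + (\<Sum>n\<in>{1..B}. h (Suc n))"
proof -
  have "(\<Sum>n\<in>{1..Suc B}. h n) = h 1 + (\<Sum>n\<in>{Suc 1..Suc B}. h n)" by (rule sum.atLeast_Suc_atMost) simp
  also have "(\<Sum>n\<in>{Suc 1..Suc B}. h n) = (\<Sum>n\<in>{1..B}. h (Suc n))" by (rule sum.shift_bounds_cl_Suc_ivl)
  finally show ?thesis .
qed

lemma prod_split1: "(\<Prod>n\<in>{1..Suc B}. h n) = h 1 * (\<Prod>n\<in>{1..B}. h (Suc n))"
proof -
  have "(\<Prod>n\<in>{1..Suc B}. h n) = h 1 * (\<Prod>n\<in>{Suc 1..Suc B}. h n)" by (rule prod.atLeast_Suc_atMost) simp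
  also have "(\<Prod>n\<in>{Suc 1..Suc B}. h n) = (\<Prod>n\<in>{1..B}. h (Suc n))" by (rule prod.shift_bounds_cl_Suc_ivl)
  finally show ?thesis .
qed

lemma sum_gtSuc: "(\<Sum>m\<in>{Suc n<..Suc B}. h m) = (\<Sum>m\<in>{n<..B}. h (Suc m))"
proof -
  have "(\<Sum>m\<in>{Suc n<..Suc B}. h m) = (\<Sum>m\<in>{Suc (Suc n)..Suc B}. h m)"
    by (simp only: atLeastSucAtMost_greaterThanAtMost)
  also have "\<dots> = (\<Sum>m\<in>{Suc n..B}. h (Suc m))" by (rule sum.shift_bounds_cl_Suc_ivl)
  also have "\<dots> = (\<Sum>m\<in>{n<..B}. h (Suc m))" by (simp only: atLeastSucAtMost_greaterThanAtMost)
  finally show ?thesis .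
qed

lemma sum_gt0Suc: fixes B :: nat shows "(\<Sum>m\<in>{0<..B}. h m) = (\<Sum>m\<in>{1..B}. h m)"
  by (rule sum.cong) auto

lemma shin_sum: "(\<Sum>n\<in>{1..Suc B}. h n (shin j g n)) = h 1 j + (\<Sum>n\<in>{1..B}. h (Suc n) (g n))"
  by (subst sum_split1) (simp add: shin_def)

lemma shin_fam:
  assumes g: "g \<in> famS B u r"
  shows "shin j g \<in> famS (Suc B) (j + u + r) (j + r)"
proof -
  have g0: "g 0 = 0" "\<forall>n>B. g n = 0" "(\<Sum>n\<in>{1..B}. n * g n) = u" "(\<Sum>n\<in>{1..B}. g n) = r"
    using g by (auto simp: famS_def fam_def)
  have a: "(\<Sum>n\<in>{1..Suc B}. n * shin j g n) = j + u + r"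
    using shin_sum[where h="\<lambda>n x. n * x" and B=B and j=j and g=g] g0 by (simp add: sum.distrib)
  have b: "(\<Sum>n\<in>{1..Suc B}. shin j g n) = j + r"
    using shin_sum[where h="\<lambda>n x. x" and B=B and j=j and g=g] g0 by simp
  have c: "\<forall>n>Suc B. shin j g n = 0" using g0 by (auto simp: shin_def)
  have z: "shin j g 0 = 0" by (simp add: shin_def)
  show ?thesis unfolding famS_def fam_def using a b c z by blast
qed

lemma shout_fam:
  assumes f: "f \<in> famS (Suc B) t s"
  shows "shout f \<in> famS B (t - s) (s - f 1)" "f 1 \<le> s" "s \<le> t" "shin (f 1) (shout f) = f"
proof -
  have f0: "f 0 = 0" "\<forall>n>Suc B. f n = 0" "(\<Sum>n\<in>{1..Suc B}. n * f n) = t" "(\<Sum>n\<in>{1..Suc B}. f n) = s"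
    using f by (auto simp: famS_def fam_def)
  have e1: "f 1 + (\<Sum>n\<in>{1..B}. Suc n * f (Suc n)) = t" using f0(3) sum_split1[where h="\<lambda>n. n * f n" and B=B] by simp
  have e2: "f 1 + (\<Sum>n\<in>{1..B}. f (Suc n)) = s" using f0(4) sum_split1[where h="\<lambda>n. f n" and B=B] by simp
  have e3: "(\<Sum>n\<in>{1..B}. Suc n * f (Suc n)) = (\<Sum>n\<in>{1..B}. n * f (Suc n)) + (\<Sum>n\<in>{1..B}. f (Suc n))"
    by (simp add: sum.distrib)
  have so1: "(\<Sum>n\<in>{1..B}. n * shout f n) = (\<Sum>n\<in>{1..B}. n * f (Suc n))"
    by (rule sum.cong) (auto simp: shout_def)
  have so2: "(\<Sum>n\<in>{1..B}. shout f n) = (\<Sum>n\<in>{1..B}. f (Suc n))"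
    by (rule sum.cong) (auto simp: shout_def)
  show "f 1 \<le> s" using e2 by simp
  show "s \<le> t" using e1 e2 e3 by simp
  show "shout f \<in> famS B (t - s) (s - f 1)"
  proof -
    have z: "shout f 0 = 0" by (simp add: shout_def)
    have v: "\<forall>n>B. shout f n = 0" using f0(2) by (simp add: shout_def)
    have w1: "(\<Sum>n\<in>{1..B}. n * shout f n) = t - s" using e1 e2 e3 so1 by linarith
    have w2: "(\<Sum>n\<in>{1..B}. shout f n) = s - f 1" using e2 so2 by linarith
    show ?thesis unfolding famS_def fam_def using z v w1 w2 by blast
  qed
  show "shin (f 1) (shout f) = f"
    using f0(1) by (auto simp: shin_def shout_def fun_eq_iff)
qed

lemma famS_Suc:
  assumes "s \<le> t"
  shows "famS (Suc B) t s = (\<lambda>(j,g). shin j g) ` (SIGMA j:{..s}. famS B (t - s) (s - j))"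
proof
  show "famS (Suc B) t s \<subseteq> (\<lambda>(j,g). shin j g) ` (SIGMA j:{..s}. famS B (t - s) (s - j))"
  proof
    fix f assume f: "f \<in> famS (Suc B) t s"
    note h = shout_fam[OF f]
    show "f \<in> (\<lambda>(j,g). shin j g) ` (SIGMA j:{..s}. famS B (t - s) (s - j))"
      using h by (intro image_eqI[of _ _ "(f 1, shout f)"]) auto
  qed
next
  show "(\<lambda>(j,g). shin j g) ` (SIGMA j:{..s}. famS B (t - s) (s - j)) \<subseteq> famS (Suc B) t s"
  proof clarify
    fix j g assume j: "j \<le> s" and g: "g \<in> famS B (t - s) (s - j)"
    have "shin j g \<in> famS (Suc B) (j + (t - s) + (s - j)) (j + (s - j))" by (rule shin_fam[OF g])
    moreover have "j + (t - s) + (s - j) = t" "j + (s - j) = s" using j assms by auto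
    ultimately show "shin j g \<in> famS (Suc B) t s" by simp
  qed
qed

lemma shin_inj: "inj_on (\<lambda>(j,g). shin j g) (SIGMA j:{..s}. famS B u (s - j))"
proof (rule inj_onI, clarify)
  fix j g j' g'
  assume g: "g \<in> famS B u (s - j)" and g': "g' \<in> famS B u (s - j')" and e: "shin j g = shin j' g'"
  have "j = j'" using fun_cong[OF e, of 1] by (simp add: shin_def)
  moreover have "g = g'"
  proof
    fix n
    show "g n = g' n"
    proof (cases "n = 0")
      case True then show ?thesis using g g' by (simp add: famS_def fam_def)
    next
      case False then show ?thesis using fun_cong[OF e, of "Suc n"] by (simp add: shin_def)
    qed
  qed
  ultimately show "j = j' \<and> g = g'" by simp
qed

lemma Wt_shin:
  assumes g: "g \<in> famS B u r"
  shows "Wt c a (Suc B) (shin j g) = ((a + 2 * real u + real j + c) gchoose j) * Wt c (a + c) B g"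
proof -
  have g0: "g 0 = 0" "(\<Sum>n\<in>{1..B}. n * g n) = u"
    using g by (auto simp: famS_def fam_def)
  have s1: "(\<Sum>m\<in>{1<..Suc B}. (real m - real (1::nat)) * real (shin j g m)) = real u"
  proof -
    have "(\<Sum>m\<in>{1<..Suc B}. (real m - real (1::nat)) * real (shin j g m))
        = (\<Sum>m\<in>{0<..B}. (real (Suc m) - 1) * real (shin j g (Suc m)))"
      using sum_gtSuc[where n=0 and B=B and h="\<lambda>m. (real m - real (1::nat)) * real (shin j g m)"] by simp
    also have "\<dots> = (\<Sum>m\<in>{1..B}. real m * real (g m))"
      unfolding sum_gt0Suc by (rule sum.cong) (auto simp: shin_def)
    also have "\<dots> = real u" unfolding g0(2)[symmetric] by simp
    finally show ?thesis .
  qed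
  have s2: "(\<Sum>m\<in>{Suc n<..Suc B}. (real m - real (Suc n)) * real (shin j g m))
      = (\<Sum>m\<in>{n<..B}. (real m - real n) * real (g m))" if "1 \<le> n" for n
    unfolding sum_gtSuc using that by (intro sum.cong) (auto simp: shin_def)
  have t1: "(a + 2 * (\<Sum>m\<in>{1<..Suc B}. (real m - real (1::nat)) * real (shin j g m)) + real (shin j g 1) + c * real (1::nat)) gchoose (shin j g 1)
      = (a + 2 * real u + real j + c) gchoose j"
    by (simp only: s1) (simp add: shin_def)
  have t2: "(\<Prod>n\<in>{1..B}. (a + 2 * (\<Sum>m\<in>{Suc n<..Suc B}. (real m - real (Suc n)) * real (shin j g m)) + real (shin j g (Suc n)) + c * real (Suc n)) gchoose (shin j g (Suc n)))
      = (\<Prod>n\<in>{1..B}. ((a + c) + 2 * (\<Sum>m\<in>{n<..B}. (real m - real n) * real (g m)) + real (g n) + c * real n) gchoose (g n))"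
  proof (rule prod.cong[OF refl])
    fix n assume n: "n \<in> {1..B}"
    have e: "shin j g (Suc n) = g n" using n by (simp add: shin_def)
    show "(a + 2 * (\<Sum>m\<in>{Suc n<..Suc B}. (real m - real (Suc n)) * real (shin j g m)) + real (shin j g (Suc n)) + c * real (Suc n)) gchoose (shin j g (Suc n))
      = ((a + c) + 2 * (\<Sum>m\<in>{n<..B}. (real m - real n) * real (g m)) + real (g n) + c * real n) gchoose (g n)"
    proof -
      have s2n: "(\<Sum>m\<in>{Suc n<..Suc B}. (real m - real (Suc n)) * real (shin j g m))
      = (\<Sum>m\<in>{n<..B}. (real m - real n) * real (g m))" using s2[of n] n by simp
      show ?thesis unfolding s2n e by (simp add: algebra_simps)
    qed
  qed
  show ?thesis
    unfolding Wt_def prod_split1 t1 t2 ..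
qed

lemma GG_Suc:
  assumes "s \<le> t"
  shows "GG c a (Suc B) t s = (\<Sum>j\<le>s. ((a + 2 * real (t - s) + real j + c) gchoose j) * GG c (a + c) B (t - s) (s - j))"
proof -
  have "GG c a (Suc B) t s = (\<Sum>x\<in>(SIGMA j:{..s}. famS B (t - s) (s - j)). Wt c a (Suc B) ((\<lambda>(j,g). shin j g) x))"
    unfolding GG_def famS_Suc[OF assms] by (rule sum.reindex[OF shin_inj, unfolded comp_def])
  also have "\<dots> = (\<Sum>(j,g)\<in>(SIGMA j:{..s}. famS B (t - s) (s - j)). Wt c a (Suc B) (shin j g))"
    by (simp add: case_prod_unfold)
  also have "\<dots> = (\<Sum>j\<le>s. \<Sum>g\<in>famS B (t - s) (s - j). Wt c a (Suc B) (shin j g))"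
    by (rule sum.Sigma[symmetric]) (auto simp: finite_famS)
  also have "\<dots> = (\<Sum>j\<le>s. \<Sum>g\<in>famS B (t - s) (s - j). ((a + 2 * real (t - s) + real j + c) gchoose j) * Wt c (a + c) B g)"
    by (intro sum.cong refl) (simp add: Wt_shin)
  also have "\<dots> = (\<Sum>j\<le>s. ((a + 2 * real (t - s) + real j + c) gchoose j) * GG c (a + c) B (t - s) (s - j))"
    by (simp add: GG_def sum_distrib_left)
  finally show ?thesis .
qed



lemma Wt_zero: "Wt c a B (\<lambda>_. 0) = 1"
  by (simp add: Wt_def)

lemma famS_t0: "famS B 0 s = (if s = 0 then {\<lambda>_. 0} else {})"
proof -
  have "f = (\<lambda>_. 0)" if f: "f \<in> fam B 0" for f
  proof
    fix n
    show "f n = 0"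
    proof (cases "n = 0 \<or> n > B")
      case True then show ?thesis using f by (auto simp: fam_def)
    next
      case False
      then have "n \<in> {1..B}" by auto
      moreover have "(\<Sum>n\<in>{1..B}. n * f n) = 0" using f by (simp add: fam_def)
      ultimately have "n * f n = 0" by simp
      then show ?thesis using False by simp
    qed
  qed
  moreover have "(\<lambda>_. 0) \<in> fam B 0" by (simp add: fam_def)
  ultimately have "fam B 0 = {\<lambda>_. 0}" by blast
  then show ?thesis by (auto simp: famS_def)
qed

lemma famS_s0: "0 < t \<Longrightarrow> famS B t 0 = {}"
proof (rule ccontr)
  assume t: "0 < t" and ne: "famS B t 0 \<noteq> {}"
  then obtain f where f: "f \<in> famS B t 0" by auto
  then have "\<forall>n\<in>{1..B}. f n = 0" by (simp add: famS_def)
  then have "(\<Sum>n\<in>{1..B}. n * f n) = 0" by simp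
  then show False using f t by (simp add: famS_def fam_def)
qed

lemma famS_big: "t < s \<Longrightarrow> famS B t s = {}"
proof (rule ccontr)
  assume t: "t < s" and ne: "famS B t s \<noteq> {}"
  then obtain f where f: "f \<in> famS B t s" by auto
  have "(\<Sum>n\<in>{1..B}. f n) \<le> (\<Sum>n\<in>{1..B}. n * f n)"
    by (intro sum_mono) simp
  then show False using f t by (simp add: famS_def fam_def)
qed

lemma famS_B0: "famS 0 t s = (if t = 0 \<and> s = 0 then {\<lambda>_. 0} else {})"
proof -
  have "f \<in> fam 0 t \<Longrightarrow> f = (\<lambda>_. 0)" for f
    by (auto simp: fam_def fun_eq_iff) (metis gr0I)
  then show ?thesis by (auto simp: famS_def fam_def)
qed

lemma GG_t0: "GG c a B 0 s = (if s = 0 then 1 else 0)"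
  by (simp add: GG_def famS_t0 Wt_zero)

lemma GG_empty: "famS B t s = {} \<Longrightarrow> GG c a B t s = 0"
  by (simp add: GG_def)

definition Q1 :: "real \<Rightarrow> nat \<Rightarrow> nat \<Rightarrow> real" where
  "Q1 a t s = (if t = 0 then (if s = 0 then 1 else 0) else if s = 0 then 0
     else ((a + real t + 1) gchoose s) * real ((t - 1) choose (s - 1)))"

definition Q0 :: "real \<Rightarrow> nat \<Rightarrow> nat \<Rightarrow> real" where
  "Q0 a t s = (if t = 0 then (if s = 0 then 1 else 0) else if s = 0 then 0
     else ((a + real t + 1) gchoose s) * real ((t - 1) choose (s - 1))
          - real (t choose s) * ((a + real t) gchoose (s - 1)))"

lemma sum_rev_atMost: fixes s :: nat shows "(\<Sum>j\<le>s. h j) = (\<Sum>k\<le>s. h (s - k))"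
  unfolding atMost_atLeast0 by (subst sum.atLeastAtMost_rev) simp

lemma Q1_step:
  assumes s: "1 \<le> s" and that: "s \<le> t"
  shows "(\<Sum>j\<le>s. ((a + 2 * real (t - s) + real j + 1) gchoose j) * Q1 (a + 1) (t - s) (s - j)) = Q1 a t s"
proof (cases "t = s")
  case True
  have "(\<Sum>j\<le>s. ((a + 2 * real (t - s) + real j + 1) gchoose j) * Q1 (a + 1) (t - s) (s - j))
      = (\<Sum>j\<le>s. if j = s then (a + real s + 1) gchoose s else 0)"
    using True by (intro sum.cong refl) (auto simp: Q1_def add_ac)
  also have "\<dots> = (a + real s + 1) gchoose s" by simp
  finally show ?thesis using True s by (simp add: Q1_def)
next
  case False
  define u where "u = t - s"
  have u: "1 \<le> u" "t = u + s" using False that by (auto simp: u_def)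
  have "(\<Sum>j\<le>s. ((a + 2 * real (t - s) + real j + 1) gchoose j) * Q1 (a + 1) (t - s) (s - j))
      = (\<Sum>k\<le>s. ((a + 2 * real u + real (s - k) + 1) gchoose (s - k)) * Q1 (a + 1) u (s - (s - k)))"
    unfolding u_def by (rule sum_rev_atMost)
  also have "\<dots> = (\<Sum>k\<le>s. Fst (a + real u + 2) u s k)"
  proof (intro sum.cong refl)
    fix k assume k: "k \<in> {..s}"
    show "((a + 2 * real u + real (s - k) + 1) gchoose (s - k)) * Q1 (a + 1) u (s - (s - k)) = Fst (a + real u + 2) u s k"
      using k u by (auto simp: Q1_def Fst_def algebra_simps)
  qed
  also have "\<dots> = ((a + real u + 2 + real s - 1) gchoose s) * real ((u + s - 1) choose (s - 1))"
    by (rule star[OF u(1) s])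
  also have "\<dots> = Q1 a t s"
    using u s by (simp add: Q1_def algebra_simps)
  finally show ?thesis .
qed

theorem GG1:
  assumes "t \<le> B"
  shows "GG 1 a B t s = Q1 a t s"
  using assms
proof (induction B arbitrary: a t s)
  case 0
  then show ?case by (simp add: GG_t0 Q1_def)
next
  case (Suc B)
  consider "t = 0" | "0 < t" "s = 0" | "t < s" | "1 \<le> s" "s \<le> t" by linarith
  then show ?case
  proof cases
    case 1 then show ?thesis by (simp add: GG_t0 Q1_def)
  next
    case 2 then show ?thesis by (simp add: GG_empty famS_s0 Q1_def)
  next
    case 3 then show ?thesis by (simp add: GG_empty famS_big Q1_def binomial_eq_0)
  next
    case 4
    have "GG 1 a (Suc B) t s = (\<Sum>j\<le>s. ((a + 2 * real (t - s) + real j + 1) gchoose j) * GG 1 (a + 1) B (t - s) (s - j))"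
      by (rule GG_Suc) (use 4 in simp)
    also have "\<dots> = (\<Sum>j\<le>s. ((a + 2 * real (t - s) + real j + 1) gchoose j) * Q1 (a + 1) (t - s) (s - j))"
      using Suc.IH[of "t - s"] Suc.prems 4 by simp
    also have "\<dots> = Q1 a t s" by (rule Q1_step) (use 4 in auto)
    finally show ?thesis .
  qed
qed

lemma Q0_mult:
  assumes u: "1 \<le> u" and k: "1 \<le> k" and a: "0 \<le> a"
  shows "(a + real u + 1) * Q0 a u k = (a + 1) * (((a + real u + 1) gchoose k) * real ((u - 1) choose (k - 1)))"
proof -
  obtain k' where k': "k = Suc k'" using k by (cases k) auto
  define g1 where "g1 = (a + real u + 1) gchoose k"
  define g0 where "g0 = (a + real u) gchoose (k - 1)"
  define C' where "C' = real ((u - 1) choose (k - 1))"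
  define Cu where "Cu = real (u choose k)"
  have e1: "real k * g1 = (a + real u + 1) * g0"
    using gbinomial_absorption[of k' "a + real u + 1"] k' by (simp add: g1_def g0_def)
  have e2n: "k * (u choose k) = u * ((u - 1) choose (k - 1))"
    using k by (intro times_binomial_minus1_eq) simp
  have e2: "real k * Cu = real u * C'"
    unfolding Cu_def C'_def by (metis e2n of_nat_mult)
  have Q: "Q0 a u k = g1 * C' - Cu * g0"
    using u k by (simp add: Q0_def g1_def g0_def C'_def Cu_def)
  have "real k * ((a + real u + 1) * Q0 a u k) = (a + real u + 1) * (real k * g1) * C' - (a + real u + 1) * g0 * (real k * Cu)"
    unfolding Q by (simp add: algebra_simps)
  also have "\<dots> = (a + real u + 1) * (real k * g1) * C' - (real k * g1) * (real u * C')"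
    unfolding e1 e2 by (simp add: algebra_simps)
  also have "\<dots> = real k * ((a + 1) * (g1 * C'))"
    by (simp add: algebra_simps)
  finally show ?thesis using k by (simp add: g1_def C'_def)
qed

lemma Q0_step:
  assumes s: "1 \<le> s" and st: "s \<le> t" and a: "0 \<le> a"
  shows "(\<Sum>j\<le>s. ((a + 2 * real (t - s) + real j + 0) gchoose j) * Q0 (a + 0) (t - s) (s - j)) = Q0 a t s"
proof (cases "t = s")
  case True
  have "(\<Sum>j\<le>s. ((a + 2 * real (t - s) + real j + 0) gchoose j) * Q0 (a + 0) (t - s) (s - j))
      = (\<Sum>j\<le>s. if j = s then (a + real s) gchoose s else 0)"
    using True by (intro sum.cong refl) (auto simp: Q0_def add_ac)
  also have "\<dots> = (a + real s) gchoose s" by simp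
  also have "\<dots> = Q0 a t s"
  proof -
    obtain s' where s': "s = Suc s'" using s by (cases s) auto
    have "(a + real s + 1) gchoose Suc s' = ((a + real s) gchoose s') + ((a + real s) gchoose Suc s')"
      by (rule gbinomial_Suc_Suc)
    then show ?thesis using True s' by (simp add: Q0_def)
  qed
  finally show ?thesis .
next
  case False
  define u where "u = t - s"
  have u: "1 \<le> u" "t = u + s" using False st by (auto simp: u_def)
  define T where "T = (\<Sum>j\<le>s. ((a + 2 * real (t - s) + real j + 0) gchoose j) * Q0 (a + 0) (t - s) (s - j))"
  have "(a + real u + 1) * T = (\<Sum>k\<le>s. ((a + 2 * real u + real (s - k)) gchoose (s - k)) * ((a + real u + 1) * Q0 a u k))"
    unfolding T_def u_def by (subst sum_rev_atMost) (simp add: sum_distrib_left algebra_simps)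
  also have "\<dots> = (a + 1) * (\<Sum>k\<le>s. Fst (a + real u + 1) u s k)"
    unfolding sum_distrib_left
  proof (intro sum.cong refl)
    fix k assume k: "k \<in> {..s}"
    show "((a + 2 * real u + real (s - k)) gchoose (s - k)) * ((a + real u + 1) * Q0 a u k) = (a + 1) * Fst (a + real u + 1) u s k"
    proof (cases "k = 0")
      case True then show ?thesis using u by (simp add: Q0_def Fst_def)
    next
      case False
      then show ?thesis using k u Q0_mult[OF u(1) _ a, of k] by (simp add: Fst_def algebra_simps)
    qed
  qed
  also have "\<dots> = (a + 1) * (((a + real u + 1 + real s - 1) gchoose s) * real ((u + s - 1) choose (s - 1)))"
    by (simp only: star[OF u(1) s])
  finally have T1: "(a + real u + 1) * T = (a + 1) * (((a + real t) gchoose s) * real ((t - 1) choose (s - 1)))"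
    using u by (simp add: algebra_simps)
  have t1: "1 \<le> t" using u by simp
  have Q: "(a + real t + 1) * Q0 a t s = (a + 1) * (((a + real t + 1) gchoose s) * real ((t - 1) choose (s - 1)))"
    by (rule Q0_mult[OF t1 s a])
  have ab: "(a + real t + 1 - real s) * ((a + real t + 1) gchoose s) = (a + real t + 1) * ((a + real t + 1 - 1) gchoose s)"
    by (rule gbinomial_absorb_comp)
  have ab': "(a + real u + 1) * ((a + real t + 1) gchoose s) = (a + real t + 1) * ((a + real t) gchoose s)"
    using ab u by (simp add: algebra_simps)
  have "(a + real t + 1) * ((a + real u + 1) * Q0 a t s) = (a + real t + 1) * ((a + real u + 1) * T)"
  proof -
    have "(a + real t + 1) * ((a + real u + 1) * Q0 a t s) = (a + real u + 1) * ((a + real t + 1) * Q0 a t s)"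
      by (simp add: algebra_simps)
    also have "\<dots> = (a + 1) * real ((t - 1) choose (s - 1)) * ((a + real u + 1) * ((a + real t + 1) gchoose s))"
      unfolding Q by (simp add: algebra_simps)
    also have "\<dots> = (a + 1) * real ((t - 1) choose (s - 1)) * ((a + real t + 1) * ((a + real t) gchoose s))"
      unfolding ab' ..
    also have "\<dots> = (a + real t + 1) * ((a + real u + 1) * T)"
      unfolding T1 by (simp add: algebra_simps)
    finally show ?thesis .
  qed
  moreover have "a + real t + 1 \<noteq> 0" "a + real u + 1 \<noteq> 0" using a by auto
  ultimately have "Q0 a t s = T" by simp
  then show ?thesis unfolding T_def by simp
qed

theorem GG0:
  assumes "t \<le> B" and a: "0 \<le> a"
  shows "GG 0 a B t s = Q0 a t s"
  using assms(1)
proof (induction B arbitrary: t s)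
  case 0
  then show ?case by (simp add: GG_t0 Q0_def)
next
  case (Suc B)
  consider "t = 0" | "0 < t" "s = 0" | "t < s" | "1 \<le> s" "s \<le> t" by linarith
  then show ?case
  proof cases
    case 1 then show ?thesis by (simp add: GG_t0 Q0_def)
  next
    case 2 then show ?thesis by (simp add: GG_empty famS_s0 Q0_def)
  next
    case 3 then show ?thesis by (simp add: GG_empty famS_big Q0_def binomial_eq_0)
  next
    case 4
    have "GG 0 a (Suc B) t s = (\<Sum>j\<le>s. ((a + 2 * real (t - s) + real j + 0) gchoose j) * GG 0 (a + 0) B (t - s) (s - j))"
      by (rule GG_Suc) (use 4 in simp)
    also have "\<dots> = (\<Sum>j\<le>s. ((a + 2 * real (t - s) + real j + 0) gchoose j) * Q0 (a + 0) (t - s) (s - j))"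
      using Suc.IH[of "t - s"] Suc.prems 4 by simp
    also have "\<dots> = Q0 a t s" by (rule Q0_step) (use 4 a in auto)
    finally show ?thesis .
  qed
qed



definition H :: "real \<Rightarrow> real \<Rightarrow> nat \<Rightarrow> nat \<Rightarrow> real" where
  "H c a B t = (\<Sum>f\<in>fam B t. Wt c a B f)"

lemma H_GG: "H c a B t = (\<Sum>s\<le>t. GG c a B t s)"
proof -
  have "(\<Sum>s\<le>t. GG c a B t s) = (\<Sum>s\<le>t. \<Sum>f\<in>{f\<in>fam B t. (\<Sum>n\<in>{1..B}. f n) = s}. Wt c a B f)"
    by (simp add: GG_def famS_def)
  also have "\<dots> = (\<Sum>f\<in>fam B t. Wt c a B f)"
  proof (rule sum.group[OF finite_fam])
    show "finite {..t}" by simp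
    show "(\<lambda>f. \<Sum>n\<in>{1..B}. f n) ` fam B t \<subseteq> {..t}"
    proof
      fix y assume "y \<in> (\<lambda>f. \<Sum>n\<in>{1..B}. f n) ` fam B t"
      then obtain f where f: "f \<in> fam B t" and y: "y = (\<Sum>n\<in>{1..B}. f n)" by blast
      have "(\<Sum>n\<in>{1..B}. f n) \<le> (\<Sum>n\<in>{1..B}. n * f n)" by (intro sum_mono) simp
      then show "y \<in> {..t}" using f y by (simp add: fam_def)
    qed
  qed
  finally show ?thesis by (simp add: H_def)
qed

lemma sumQ1_part:
  assumes t: "1 \<le> t"
  shows "(\<Sum>s\<le>t. (if s = 0 then 0 else ((a + real t + 1) gchoose s) * real ((t - 1) choose (s - 1)))) = (a + 2 * real t) gchoose t"
proof -
  have "(\<Sum>s\<le>t. (if s = 0 then 0 else ((a + real t + 1) gchoose s) * real ((t - 1) choose (s - 1))))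
      = (\<Sum>k=0..t. ((a + real t + 1) gchoose k) * (real (t - 1) gchoose (t - k)))"
    unfolding atMost_atLeast0
  proof (intro sum.cong refl)
    fix k assume k: "k \<in> {0..t}"
    show "(if k = 0 then 0 else ((a + real t + 1) gchoose k) * real ((t - 1) choose (k - 1))) = ((a + real t + 1) gchoose k) * (real (t - 1) gchoose (t - k))"
    proof (cases "k = 0")
      case True
      have "real (t - 1) gchoose (t - k) = real ((t - 1) choose (t - k))" by (simp only: binomial_gbinomial)
      also have "(t - 1) choose (t - k) = 0" using True t by (simp add: binomial_eq_0)
      finally show ?thesis using True by simp
    next
      case False
      then have "(t - 1) choose (k - 1) = (t - 1) choose (t - k)"
        using k by (subst binomial_symmetric) (auto simp: Suc_diff_le)
      then show ?thesis using False by (simp add: binomial_gbinomial[symmetric])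
    qed
  qed
  also have "\<dots> = ((a + real t + 1) + real (t - 1)) gchoose t" by (rule gbinomial_Vandermonde)
  also have "(a + real t + 1) + real (t - 1) = a + 2 * real t" using t by (simp add: of_nat_diff)
  finally show ?thesis .
qed

lemma sumQ0_part:
  "(\<Sum>s\<le>Suc t'. (if s = 0 then 0 else real (Suc t' choose s) * ((a + real (Suc t')) gchoose (s - 1)))) = (a + 2 * real (Suc t')) gchoose t'"
proof -
  have "(\<Sum>s\<le>Suc t'. (if s = 0 then 0 else real (Suc t' choose s) * ((a + real (Suc t')) gchoose (s - 1))))
      = (\<Sum>k\<le>t'. real (Suc t' choose Suc k) * ((a + real (Suc t')) gchoose k))"
    by (subst sum.atMost_Suc_shift) simp
  also have "\<dots> = (\<Sum>k=0..t'. ((a + real (Suc t')) gchoose k) * (real (Suc t') gchoose (t' - k)))"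
    unfolding atMost_atLeast0
  proof (intro sum.cong refl)
    fix k assume k: "k \<in> {0..t'}"
    have "Suc t' choose Suc k = Suc t' choose (t' - k)" using k by (subst binomial_symmetric) auto
    then show "real (Suc t' choose Suc k) * ((a + real (Suc t')) gchoose k) = ((a + real (Suc t')) gchoose k) * (real (Suc t') gchoose (t' - k))"
      by (simp only: binomial_gbinomial[symmetric] mult.commute)
  qed
  also have "\<dots> = ((a + real (Suc t')) + real (Suc t')) gchoose t'" by (rule gbinomial_Vandermonde)
  also have "(a + real (Suc t')) + real (Suc t') = a + 2 * real (Suc t')" by simp
  finally show ?thesis .
qed

theorem H1:
  assumes "t \<le> B"
  shows "H 1 a B t = (a + 2 * real t) gchoose t"
proof (cases "t = 0")
  case True then show ?thesis using assms by (simp add: H_GG GG1 Q1_def)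
next
  case False
  have "H 1 a B t = (\<Sum>s\<le>t. Q1 a t s)" using assms by (simp add: H_GG GG1)
  also have "\<dots> = (\<Sum>s\<le>t. (if s = 0 then 0 else ((a + real t + 1) gchoose s) * real ((t - 1) choose (s - 1))))"
    using False by (intro sum.cong refl) (simp add: Q1_def)
  also have "\<dots> = (a + 2 * real t) gchoose t" by (rule sumQ1_part) (use False in simp)
  finally show ?thesis .
qed

theorem H0:
  assumes "t \<le> B" and a: "0 \<le> a"
  shows "H 0 a B t = ((a + 2 * real t) gchoose t) - (if t = 0 then 0 else (a + 2 * real t) gchoose (t - 1))"
proof (cases "t = 0")
  case True then show ?thesis using assms by (simp add: H_GG GG0 Q0_def)
next
  case False
  have "H 0 a B t = (\<Sum>s\<le>t. Q0 a t s)" using assms by (simp add: H_GG GG0)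
  also have "\<dots> = (\<Sum>s\<le>t. (if s = 0 then 0 else ((a + real t + 1) gchoose s) * real ((t - 1) choose (s - 1))))
     - (\<Sum>s\<le>t. (if s = 0 then 0 else real (t choose s) * ((a + real t) gchoose (s - 1))))"
    unfolding sum_subtractf[symmetric] using False by (intro sum.cong refl) (simp add: Q0_def)
  also have "\<dots> = ((a + 2 * real t) gchoose t) - ((a + 2 * real t) gchoose (t - 1))"
  proof -
    obtain t' where t': "t = Suc t'" using False by (cases t) auto
    show ?thesis using sumQ1_part[of t a] sumQ0_part[of t' a] unfolding t' by simp
  qed
  finally show ?thesis using False by simp
qed



lemma configs_eq:
  assumes NM: "2 * M \<le> N"
  shows "configs N M = (\<lambda>(k, Mpf, Mf). (N - 2 * k, Mf, Mpf)) ` (SIGMA k:{..M}. fam M k \<times> fam M (M - k))"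
proof
  show "configs N M \<subseteq> (\<lambda>(k, Mpf, Mf). (N - 2 * k, Mf, Mpf)) ` (SIGMA k:{..M}. fam M k \<times> fam M (M - k))"
  proof
    fix x assume x: "x \<in> configs N M"
    obtain Nr Mf Mpf where xe: "x = (Nr, Mf, Mpf)" by (cases x) auto
    define k where "k = (\<Sum>n\<in>{1..M}. n * Mpf n)"
    have c: "Mf 0 = 0" "Mpf 0 = 0" "\<forall>n>M. Mf n = 0 \<and> Mpf n = 0" "N = Nr + 2 * k"
        "M = (\<Sum>n\<in>{1..M}. n * (Mf n + Mpf n))"
      using x by (auto simp: configs_def xe k_def)
    have "M = (\<Sum>n\<in>{1..M}. n * Mf n) + k"
      using c(5) by (simp add: k_def algebra_simps sum.distrib)
    then have k: "k \<le> M" "(\<Sum>n\<in>{1..M}. n * Mf n) = M - k" by auto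
    have "Mpf \<in> fam M k" "Mf \<in> fam M (M - k)" using c k by (auto simp: fam_def k_def)
    moreover have "Nr = N - 2 * k" using c by simp
    ultimately show "x \<in> (\<lambda>(k, Mpf, Mf). (N - 2 * k, Mf, Mpf)) ` (SIGMA k:{..M}. fam M k \<times> fam M (M - k))"
      using k xe by (intro image_eqI[of _ _ "(k, Mpf, Mf)"]) auto
  qed
next
  show "(\<lambda>(k, Mpf, Mf). (N - 2 * k, Mf, Mpf)) ` (SIGMA k:{..M}. fam M k \<times> fam M (M - k)) \<subseteq> configs N M"
  proof clarify
    fix k Mpf Mf assume k: "k \<le> M" and p: "Mpf \<in> fam M k" and f: "Mf \<in> fam M (M - k)"
    have s: "(\<Sum>n\<in>{1..M}. n * (Mf n + Mpf n)) = (\<Sum>n\<in>{1..M}. n * Mf n) + (\<Sum>n\<in>{1..M}. n * Mpf n)"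
      by (simp add: algebra_simps sum.distrib)
    show "(N - 2 * k, Mf, Mpf) \<in> configs N M"
      using k p f NM s by (auto simp: configs_def fam_def)
  qed
qed

lemma configs_inj:
  "inj_on (\<lambda>(k, Mpf, Mf). (N - 2 * k, Mf, Mpf)) (SIGMA k:{..M}. fam M k \<times> fam M (M - k))"
  by (rule inj_onI) (auto simp: fam_def)

lemma config_sum:
  assumes NM: "2 * M \<le> N"
  shows "(\<Sum>(Nr, Mf, Mpf)\<in>configs N M. F Nr Mf Mpf)
       = (\<Sum>k\<le>M. \<Sum>Mpf\<in>fam M k. \<Sum>Mf\<in>fam M (M - k). F (N - 2 * k) Mf Mpf)"
proof -
  have "(\<Sum>(Nr, Mf, Mpf)\<in>configs N M. F Nr Mf Mpf)
      = (\<Sum>x\<in>(SIGMA k:{..M}. fam M k \<times> fam M (M - k)). (\<lambda>(Nr, Mf, Mpf). F Nr Mf Mpf) ((\<lambda>(k, Mpf, Mf). (N - 2 * k, Mf, Mpf)) x))"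
    unfolding configs_eq[OF NM] by (rule sum.reindex[OF configs_inj, unfolded comp_def])
  also have "\<dots> = (\<Sum>(k, p)\<in>(SIGMA k:{..M}. fam M k \<times> fam M (M - k)). (\<lambda>(Mpf, Mf). F (N - 2 * k) Mf Mpf) p)"
    by (intro sum.cong refl) auto
  also have "\<dots> = (\<Sum>k\<le>M. \<Sum>p\<in>fam M k \<times> fam M (M - k). (\<lambda>(Mpf, Mf). F (N - 2 * k) Mf Mpf) p)"
    by (rule sum.Sigma[symmetric]) (auto simp: finite_fam)
  also have "\<dots> = (\<Sum>k\<le>M. \<Sum>Mpf\<in>fam M k. \<Sum>Mf\<in>fam M (M - k). F (N - 2 * k) Mf Mpf)"
    by (intro sum.cong refl) (simp add: sum.cartesian_product)
  finally show ?thesis .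
qed

lemma Pp_r:
  "real_of_int (Pp L N f M n) = real L - real N + 2 * (\<Sum>m\<in>{n<..M}. (real m - real n) * real (f m))"
  by (simp add: Pp_def)

lemma Pn_r:
  "real_of_int (Pn N M f n) = real N - 2 * real M + 2 * (\<Sum>m\<in>{n<..M}. (real m - real n) * real (f m))"
  by (simp add: Pn_def)

lemma sum_sum_prod: "(\<Sum>i\<in>A. \<Sum>j\<in>B. (c::real) * (f i * g j)) = c * sum f A * sum g B"
proof -
  have "c * sum f A * sum g B = c * (sum f A * sum g B)" by (rule mult.assoc)
  also have "sum f A * sum g B = (\<Sum>i\<in>A. \<Sum>j\<in>B. f i * g j)" by (rule sum_product)
  finally show ?thesis by (simp add: sum_distrib_left)
qed

theorem Z_H:
  assumes NM: "2 * M \<le> N"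
  shows "Z L N M = (\<Sum>k\<le>M. real (L choose (N - 2 * k)) * H 0 (real L - real N) M k * H 0 (real N - 2 * real M) M (M - k))"
proof -
  have "Z L N M = (\<Sum>k\<le>M. \<Sum>Mpf\<in>fam M k. \<Sum>Mf\<in>fam M (M - k).
      real (L choose (N - 2 * k)) * (Wt 0 (real L - real N) M Mpf * Wt 0 (real N - 2 * real M) M Mf))"
    unfolding Z_def config_sum[OF NM]
    by (intro sum.cong refl) (simp add: gbin_def Pp_r Pn_r Wt_def prod.distrib)
  also have "\<dots> = (\<Sum>k\<le>M. real (L choose (N - 2 * k)) * H 0 (real L - real N) M k * H 0 (real N - 2 * real M) M (M - k))"
    unfolding H_def by (intro sum.cong refl) (rule sum_sum_prod)
  finally show ?thesis .
qed

theorem Zt_H: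
  assumes NM: "2 * M \<le> N"
  shows "Zt L N M = (\<Sum>k\<le>M. real (L choose (N - 2 * k)) * H 1 (real L - real N) M k * H 0 (real N - 2 * real M) M (M - k))"
proof -
  have "Zt L N M = (\<Sum>k\<le>M. \<Sum>Mpf\<in>fam M k. \<Sum>Mf\<in>fam M (M - k).
      real (L choose (N - 2 * k)) * (Wt 1 (real L - real N) M Mpf * Wt 0 (real N - 2 * real M) M Mf))"
    unfolding Zt_def config_sum[OF NM]
    by (intro sum.cong refl) (simp add: gbin_def Pp_r Pn_r Wt_def prod.distrib)
  also have "\<dots> = (\<Sum>k\<le>M. real (L choose (N - 2 * k)) * H 1 (real L - real N) M k * H 0 (real N - 2 * real M) M (M - k))"
    unfolding H_def by (intro sum.cong refl) (rule sum_sum_prod)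
  finally show ?thesis .
qed



lemma choose_swap:
  fixes n a b :: nat
  shows "(n choose a) * ((n - a) choose b) = (n choose b) * ((n - b) choose a)"
proof (cases "a + b \<le> n")
  case True
  have "(n choose (a + b)) * ((a + b) choose a) = (n choose a) * ((n - a) choose (a + b - a))"
    by (rule choose_mult) (use True in auto)
  moreover have "(n choose (a + b)) * ((a + b) choose b) = (n choose b) * ((n - b) choose (a + b - b))"
    by (rule choose_mult) (use True in auto)
  moreover have "(a + b) choose a = (a + b) choose b"
    by (subst binomial_symmetric) auto
  ultimately show ?thesis by simp
next
  case False
  have l: "(n choose a) * ((n - a) choose b) = 0"
  proof (cases "a \<le> n")
    case True then have "n - a < b" using False by simp
    then show ?thesis by (simp add: binomial_eq_0)
  next
    case False then show ?thesis by (simp add: binomial_eq_0)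
  qed
  have r: "(n choose b) * ((n - b) choose a) = 0"
  proof (cases "b \<le> n")
    case True then have "n - b < a" using False by simp
    then show ?thesis by (simp add: binomial_eq_0)
  next
    case False then show ?thesis by (simp add: binomial_eq_0)
  qed
  show ?thesis by (simp only: l r)
qed

lemma tri:
  fixes L p q r :: nat
  assumes rp: "r \<le> p" and pL: "p \<le> L"
  shows "(L choose p) * ((L - p) choose q) * (p choose r) = (L choose (q + r)) * ((q + r) choose q) * ((L - (q + r)) choose (p - r))"
proof (cases "q + r \<le> L")
  case False
  then have "L - p < q" using rp pL by simp
  then show ?thesis using False by (simp add: binomial_eq_0)
next
  case True
  have e1: "(L choose p) * (p choose r) = (L choose r) * ((L - r) choose (p - r))"
    by (rule choose_mult[OF rp pL])
  have e2: "(L choose (q + r)) * ((q + r) choose r) = (L choose r) * ((L - r) choose (q + r - r))"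
    by (rule choose_mult) (use True in auto)
  have e3: "(q + r) choose q = (q + r) choose r"
    by (subst binomial_symmetric) auto
  have e4: "((L - r) choose (p - r)) * ((L - r - (p - r)) choose q) = ((L - r) choose q) * ((L - r - q) choose (p - r))"
    by (rule choose_swap)
  have x1: "L - r - (p - r) = L - p" using rp pL by simp
  have x2: "L - r - q = L - (q + r)" by simp
  have "(L choose p) * ((L - p) choose q) * (p choose r) = (L choose r) * (((L - r) choose (p - r)) * ((L - p) choose q))"
    using e1 by (metis mult.assoc mult.commute)
  also have "\<dots> = (L choose r) * (((L - r) choose q) * ((L - (q + r)) choose (p - r)))"
    using e4 unfolding x1 x2 by simp
  also have "\<dots> = (L choose (q + r)) * ((q + r) choose q) * ((L - (q + r)) choose (p - r))"
    using e2 e3 by (simp add: mult.assoc)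
  finally show ?thesis .
qed

lemma CI_term:
  fixes L N j k :: nat
  assumes kj: "k \<le> j" and jN: "2 * j \<le> N"
  shows "real (L choose (N - 2 * k)) * ((real L - real N + 2 * real k) gchoose k) * real ((N - 2 * k) choose (j - k))
    = real ((L choose j) * (j choose k) * ((L - j) choose (N - j - k)))"
proof (cases "N - 2 * k \<le> L")
  case True
  have g: "(real L - real N + 2 * real k) gchoose k = real ((L - (N - 2 * k)) choose k)"
  proof -
    have "real L - real N + 2 * real k = real (L - (N - 2 * k))" using True kj jN by (simp add: of_nat_diff)
    then show ?thesis by (simp add: binomial_gbinomial)
  qed
  have t: "(L choose (N - 2 * k)) * ((L - (N - 2 * k)) choose k) * ((N - 2 * k) choose (j - k))
      = (L choose (k + (j - k))) * ((k + (j - k)) choose k) * ((L - (k + (j - k))) choose ((N - 2 * k) - (j - k)))"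
    by (rule tri) (use True kj jN in auto)
  have x: "k + (j - k) = j" "(N - 2 * k) - (j - k) = N - j - k" using kj jN by auto
  show ?thesis unfolding g using t unfolding x by (metis of_nat_mult)
next
  case False
  have z1: "(L choose (N - 2 * k)) = 0" using False by (simp add: binomial_eq_0)
  have z2: "(L choose j) * ((L - j) choose (N - j - k)) = 0"
  proof (cases "j \<le> L")
    case True
    then have "L - j < N - j - k" using False kj jN by simp
    then show ?thesis by (simp add: binomial_eq_0)
  next
    case False then show ?thesis by (simp add: binomial_eq_0)
  qed
  have z3: "(L choose j) * (j choose k) * ((L - j) choose (N - j - k)) = 0"
    by (metis z2 mult.commute mult_zero_left mult.assoc)
  show ?thesis by (simp only: z1 z3 of_nat_0 mult_zero_left mult_zero_right)
qed

lemma CI: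
  fixes L N j :: nat
  assumes jN: "2 * j \<le> N"
  shows "(\<Sum>k\<le>j. real (L choose (N - 2 * k)) * ((real L - real N + 2 * real k) gchoose k) * real ((N - 2 * k) choose (j - k)))
    = real ((L choose j) * (L choose (N - j)))"
proof -
  have "(\<Sum>k\<le>j. real (L choose (N - 2 * k)) * ((real L - real N + 2 * real k) gchoose k) * real ((N - 2 * k) choose (j - k)))
      = real (\<Sum>k\<le>j. (L choose j) * ((j choose k) * ((L - j) choose (N - j - k))))"
    unfolding of_nat_sum
  proof (intro sum.cong refl)
    fix k assume "k \<in> {..j}"
    then have k: "k \<le> j" by simp
    show "real (L choose (N - 2 * k)) * ((real L - real N + 2 * real k) gchoose k) * real ((N - 2 * k) choose (j - k))
      = real ((L choose j) * ((j choose k) * ((L - j) choose (N - j - k))))"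
      using CI_term[OF k jN] by (metis mult.assoc)
  qed
  also have "(\<Sum>k\<le>j. (L choose j) * ((j choose k) * ((L - j) choose (N - j - k))))
      = (L choose j) * (\<Sum>k\<le>N - j. (j choose k) * ((L - j) choose (N - j - k)))"
  proof -
    have "(\<Sum>k\<le>j. (j choose k) * ((L - j) choose (N - j - k))) = (\<Sum>k\<le>N - j. (j choose k) * ((L - j) choose (N - j - k)))"
      by (rule sum.mono_neutral_left) (use jN in auto)
    then show ?thesis by (simp only: sum_distrib_left[symmetric])
  qed
  also have "\<dots> = (L choose j) * (L choose (N - j))"
  proof (cases "j \<le> L")
    case True
    have "(\<Sum>k\<le>N - j. (j choose k) * ((L - j) choose (N - j - k))) = (j + (L - j)) choose (N - j)"
      by (rule vandermonde)
    then show ?thesis using True by simp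
  next
    case False then show ?thesis by (simp add: binomial_eq_0)
  qed
  finally show ?thesis .
qed



definition hz :: "nat \<Rightarrow> nat \<Rightarrow> real" where
  "hz n t = real (n choose t) - (if t = 0 then 0 else real (n choose (t - 1)))"

definition ZT :: "nat \<Rightarrow> nat \<Rightarrow> nat \<Rightarrow> real" where
  "ZT L N M = (\<Sum>k\<le>M. real (L choose (N - 2 * k)) * ((real L - real N + 2 * real k) gchoose k) * hz (N - 2 * k) (M - k))"

lemma H0_inner:
  assumes NM: "2 * M \<le> N" and k: "k \<le> M"
  shows "H 0 (real N - 2 * real M) M (M - k) = hz (N - 2 * k) (M - k)"
proof -
  have a: "0 \<le> real N - 2 * real M" using NM by simp
  have e: "real N - 2 * real M + 2 * real (M - k) = real (N - 2 * k)" using NM k by (simp add: of_nat_diff)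
  have "H 0 (real N - 2 * real M) M (M - k) = ((real N - 2 * real M + 2 * real (M - k)) gchoose (M - k))
     - (if M - k = 0 then 0 else (real N - 2 * real M + 2 * real (M - k)) gchoose (M - k - 1))"
    by (rule H0) (use a in auto)
  then show ?thesis unfolding e hz_def by (simp add: binomial_gbinomial)
qed

lemma ZT_closed:
  assumes NM: "2 * M \<le> N"
  shows "ZT L N M = real ((L choose M) * (L choose (N - M))) - (if M = 0 then 0 else real ((L choose (M - 1)) * (L choose (N - M + 1))))"
proof -
  define A where "A k = real (L choose (N - 2 * k)) * ((real L - real N + 2 * real k) gchoose k)" for k
  have "ZT L N M = (\<Sum>k\<le>M. A k * real ((N - 2 * k) choose (M - k))) - (\<Sum>k\<le>M. A k * (if M - k = 0 then 0 else real ((N - 2 * k) choose (M - k - 1))))"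
    unfolding ZT_def A_def hz_def sum_subtractf[symmetric] by (intro sum.cong refl) (simp add: algebra_simps)
  also have "(\<Sum>k\<le>M. A k * real ((N - 2 * k) choose (M - k))) = real ((L choose M) * (L choose (N - M)))"
    unfolding A_def by (rule CI[OF NM])
  also have "(\<Sum>k\<le>M. A k * (if M - k = 0 then 0 else real ((N - 2 * k) choose (M - k - 1))))
      = (if M = 0 then 0 else real ((L choose (M - 1)) * (L choose (N - M + 1))))"
  proof (cases M)
    case 0 then show ?thesis by simp
  next
    case (Suc m)
    have "(\<Sum>k\<le>M. A k * (if M - k = 0 then 0 else real ((N - 2 * k) choose (M - k - 1))))
        = (\<Sum>k\<le>m. A k * real ((N - 2 * k) choose (m - k)))"
      unfolding Suc by (simp add: Suc_diff_le)
    also have "\<dots> = real ((L choose m) * (L choose (N - m)))"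
      unfolding A_def by (rule CI) (use NM Suc in simp)
    moreover have "N - M + 1 = N - m" "M - 1 = m" using Suc NM by auto
    ultimately show ?thesis using Suc by simp
  qed
  finally show ?thesis .
qed

lemma Zt_ZT:
  assumes NM: "2 * M \<le> N"
  shows "Zt L N M = ZT L N M"
  unfolding Zt_H[OF NM] ZT_def
  by (intro sum.cong refl) (simp add: H1 H0_inner[OF NM])

lemma Z_ZT:
  assumes NM: "2 * M \<le> N" and NL: "N \<le> L"
  shows "Z L N M = ZT L N M - (if M = 0 then 0 else ZT L (N - 2) (M - 1))"
proof -
  define b where "b = real L - real N"
  have b: "0 \<le> b" using NL by (simp add: b_def)
  define D where "D k = real (L choose (N - 2 * k)) * hz (N - 2 * k) (M - k)" for k
  have "Z L N M = (\<Sum>k\<le>M. D k * (((b + 2 * real k) gchoose k) - (if k = 0 then 0 else (b + 2 * real k) gchoose (k - 1))))"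
    unfolding Z_H[OF NM] D_def b_def
    by (intro sum.cong refl) (simp add: H0[OF _ b[unfolded b_def]] H0_inner[OF NM])
  also have "\<dots> = (\<Sum>k\<le>M. D k * ((b + 2 * real k) gchoose k)) - (\<Sum>k\<le>M. D k * (if k = 0 then 0 else (b + 2 * real k) gchoose (k - 1)))"
    unfolding sum_subtractf[symmetric] by (intro sum.cong refl) (simp add: algebra_simps)
  also have "(\<Sum>k\<le>M. D k * ((b + 2 * real k) gchoose k)) = ZT L N M"
    unfolding ZT_def D_def b_def by (intro sum.cong refl) (simp add: algebra_simps)
  also have "(\<Sum>k\<le>M. D k * (if k = 0 then 0 else (b + 2 * real k) gchoose (k - 1))) = (if M = 0 then 0 else ZT L (N - 2) (M - 1))"
  proof (cases M)
    case 0 then show ?thesis by simp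
  next
    case (Suc m)
    have N2: "2 \<le> N" using NM Suc by simp
    have "(\<Sum>k\<le>M. D k * (if k = 0 then 0 else (b + 2 * real k) gchoose (k - 1)))
        = (\<Sum>k\<le>m. D (Suc k) * ((b + 2 * real (Suc k)) gchoose k))"
      unfolding Suc by (subst sum.atMost_Suc_shift) simp
    also have "\<dots> = ZT L (N - 2) m"
      unfolding ZT_def
    proof (intro sum.cong refl)
      fix k assume "k \<in> {..m}"
      have e1: "N - 2 * Suc k = N - 2 - 2 * k" by simp
      have e2: "b + 2 * real (Suc k) = real L - real (N - 2) + 2 * real k" using N2 by (simp add: b_def of_nat_diff)
      show "D (Suc k) * ((b + 2 * real (Suc k)) gchoose k) = real (L choose (N - 2 - 2 * k)) * ((real L - real (N - 2) + 2 * real k) gchoose k) * hz (N - 2 - 2 * k) (m - k)"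
        unfolding D_def e1 e2 using Suc by (simp add: algebra_simps)
    qed
    finally show ?thesis using Suc by simp
  qed
  finally show ?thesis .
qed

lemma cbin_nat: "cbin a (int k) = int (a choose k)"
  by (simp add: cbin_def)

lemma choose_SS: "Suc (Suc L) choose Suc (Suc k) = (L choose Suc (Suc k)) + 2 * (L choose Suc k) + (L choose k)"
  by simp

theorem Zt_part:
  assumes NM: "2 * M \<le> N"
  shows "Zt L N M = real_of_int (cbin L (int M) * cbin L (int N - int M) - cbin L (int M - 1) * cbin L (int N - int M + 1))"
proof -
  have x1: "int N - int M = int (N - M)" "int (N - M) + 1 = int (N - M + 1)" using NM by auto
  show ?thesis
  proof (cases M)
    case 0
    have "cbin L (int M - 1) = 0" using 0 by (simp add: cbin_def)
    then show ?thesis unfolding Zt_ZT[OF NM] ZT_closed[OF NM] x1 cbin_nat using 0 by simp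
  next
    case (Suc m)
    have im: "int M - 1 = int m" using Suc by simp
    show ?thesis unfolding Zt_ZT[OF NM] ZT_closed[OF NM] x1 im cbin_nat using Suc by simp
  qed
qed

theorem Z_part:
  assumes NM: "2 * M \<le> N" and NL: "N \<le> L"
  shows "Z L N M = real_of_int (cbin (L + 2) (int M) * cbin L (int N - int M) - cbin L (int M - 1) * cbin (L + 2) (int N - int M + 1))"
proof -
  have x1: "int N - int M = int (N - M)" "int (N - M) + 1 = int (N - M + 1)" using NM by auto
  show ?thesis
  proof (cases M)
    case 0
    have c: "cbin L (int M - 1) = 0" using 0 by (simp add: cbin_def)
    show ?thesis unfolding Z_ZT[OF NM NL] ZT_closed[OF NM] x1 cbin_nat c using 0 by simp
  next
    case (Suc m)
    have im: "int M - 1 = int m" using Suc by simp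
    have NM2: "2 * m \<le> N - 2" using NM Suc by simp
    obtain r where r: "N - M = Suc r" using NM Suc by (cases "N - M") auto
    have "Z L N M = ZT L N M - ZT L (N - 2) m" using Z_ZT[OF NM NL] Suc by simp
    also have "\<dots> = (real ((L choose M) * (L choose (N - M))) - real ((L choose m) * (L choose (N - M + 1))))
       - (real ((L choose m) * (L choose (N - 2 - m))) - (if m = 0 then 0 else real ((L choose (m - 1)) * (L choose (N - 2 - m + 1)))))"
      unfolding ZT_closed[OF NM] ZT_closed[OF NM2] using Suc by simp
    also have "\<dots> = real_of_int (cbin (L + 2) (int M) * cbin L (int N - int M) - cbin L (int M - 1) * cbin (L + 2) (int N - int M + 1))"
    proof -
      have e1: "N - 2 - m = r" "N - M + 1 = Suc (Suc r)" using r Suc NM by auto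
      have e2: "(L + 2) choose Suc (Suc r) = (L choose Suc (Suc r)) + 2 * (L choose Suc r) + (L choose r)"
        using choose_SS[of L r] by simp
      show ?thesis
      proof (cases m)
        case 0
        have e3: "(L + 2) choose M = (L choose 1) + 2 * (L choose 0)" using Suc 0 by simp
        show ?thesis unfolding x1 im cbin_nat e1 e2 e3 using Suc 0 r by (simp add: algebra_simps)
      next
        case (Suc m')
        have e3: "(L + 2) choose M = (L choose M) + 2 * (L choose m) + (L choose m')"
          using choose_SS[of L m'] \<open>M = Suc m\<close> Suc by simp
        have e4: "N - 2 - m + 1 = N - M" using \<open>M = Suc m\<close> r e1 by simp
        show ?thesis unfolding x1 im cbin_nat e1 e2 e3 using \<open>M = Suc m\<close> Suc r e4
          by (simp add: algebra_simps)
      qed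
    qed
    finally show ?thesis .
  qed
qed

theorem corollary2:
  fixes L N M :: nat
  assumes "L \<ge> 1"
  shows "(2 * M \<le> N \<and> N \<le> L \<longrightarrow>
            Z L N M = real_of_int (cbin (L + 2) (int M) * cbin L (int N - int M)
                                   - cbin L (int M - 1) * cbin (L + 2) (int N - int M + 1)))
       \<and> (2 * M \<le> N \<and> N \<le> 2 * L \<longrightarrow>
            Zt L N M = real_of_int (cbin L (int M) * cbin L (int N - int M)
                                   - cbin L (int M - 1) * cbin L (int N - int M + 1)))"
  using Z_part Zt_part by blast

end
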